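(* Fix $i_1,\dots,i_m\in\{1,\dots,n\}$ and integers $a,r,t\ge0$, $s\ge1$ with $2a+s+r+t=m$. If $r=0$, then $$\operatorname{ad}(X)\big([\eta^ax^s\partial^t;i_1,\dots,i_m]\big)=\tfrac{\sqrt{-1}}{\sqrt2}\,[\eta^ax^{s-1}\gamma\,\partial^t;i_1,\dots,i_m],$$ and if $r=1$, then $$\operatorname{ad}(X)\big([\eta^ax^s\gamma\,\partial^t;i_1,\dots,i_m]\big)=\tfrac{2\sqrt{-1}(a+1)}{\sqrt2}[\eta^{a+1}x^{s-1}\partial^t;i_1,\dots,i_m]+\tfrac{2\sqrt{-1}(t+1)}{\sqrt2}[\eta^ax^s\partial^{t+1};i_1,\dots,i_m].$$
   Context: Fix $n\ge1$ and an invertible complex matrix $\eta=(\eta^{ij})$ with $\eta^{ij}=\eta^{ji}$. $W(2n|n)$ is the associative superalgebra generated by even $x^1,\dots,x^n,\partial_1,\dots,\partial_n$ and odd $\gamma^1,\dots,\gamma^n$ with relations $x^ix^j=x^jx^i$, $\partial_i\partial_j=\partial_j\partial_i$, $\partial_ix^j-x^j\partial_i=\delta_i^j$, $\gamma^i$ commuting with all $x^j,\partial_j$, $\gamma^i\gamma^j+\gamma^j\gamma^i=2\eta^{ij}$; $\partial^i:=\eta^{ij}\partial_j$ (summed). $X=\frac{\sqrt{-1}}{\sqrt2}\gamma^i\partial_i$ and $\operatorname{ad}(X)(b)=Xb-(-1)^{|b|}bX$ for homogeneous $b$ (supercommutator). Bracket symbol: for integers $a,p,q,t\ge0$ with $2a+p+q+t=m$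 (exponents of $\eta,x,\gamma,\partial$) and indices $i_1,\dots,i_m$, for $\sigma\in S_m$ put $T_\sigma:=\prod_{k=0}^{a-1}\eta^{i_{\sigma(2k+1)}i_{\sigma(2k+2)}}\cdot x^{i_{\sigma(2a+1)}}\cdots x^{i_{\sigma(2a+p)}}\cdot\gamma^{i_{\sigma(2a+p+1)}}\cdots\gamma^{i_{\sigma(2a+p+q)}}\cdot\partial^{i_{\sigma(2a+p+q+1)}}\cdots\partial^{i_{\sigma(m)}}$ and $[\eta^ax^p\gamma^q\partial^t;i_1,\dots,i_m]:=\frac1{2^a a!p!t!}\sum_{\sigma\in S_m}T_\sigma$ (factors with exponent $0$ omitted; the symbol is $0$ if the exponent of $x$ is negative). *)

theory Defs
  imports Complex_Main "HOL-Combinatorics.Permutations"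
begin

text \<open>A complex (associative, unital) algebra is a ring 'a together with a central
  unital ring homomorphism sc from the complex numbers (scalar multiplication is
  z.b = sc z * b).\<close>
definition complex_alg_hom :: "(complex \<Rightarrow> 'a::ring_1) \<Rightarrow> bool" where
  "complex_alg_hom sc \<longleftrightarrow>
     sc 1 = 1 \<and> (\<forall>z w. sc (z + w) = sc z + sc w) \<and> (\<forall>z w. sc (z * w) = sc z * sc w)
     \<and> (\<forall>z b. sc z * b = b * sc z)"

definition sym_invertible :: "nat \<Rightarrow> (nat \<Rightarrow> nat \<Rightarrow> complex) \<Rightarrow> bool" where
  "sym_invertible n eta \<longleftrightarrow>
     (\<forall>i\<in>{1..n}. \<forall>j\<in>{1..n}. eta i j = eta j i) \<and>
     (\<exists>zeta. \<forall>i\<in>{1..n}. \<forall>k\<in>{1..n}.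
        (\<Sum>j\<in>{1..n}. eta i j * zeta j k) = (if i = k then 1 else 0) \<and>
        (\<Sum>j\<in>{1..n}. zeta i j * eta j k) = (if i = k then 1 else 0))"

text \<open>Elements x^i, d_i (= partial_i), g^i (= gamma^i), i in 1..n, of a complex algebra
  satisfying the defining relations of W(2n|n).\<close>
definition weyl_clifford_rels ::
  "nat \<Rightarrow> (nat \<Rightarrow> nat \<Rightarrow> complex) \<Rightarrow> (complex \<Rightarrow> 'a::ring_1) \<Rightarrow>
   (nat \<Rightarrow> 'a) \<Rightarrow> (nat \<Rightarrow> 'a) \<Rightarrow> (nat \<Rightarrow> 'a) \<Rightarrow> bool" where
  "weyl_clifford_rels n eta sc x d g \<longleftrightarrow>
     (\<forall>i\<in>{1..n}. \<forall>j\<in>{1..n}.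
        x i * x j = x j * x i \<and>
        d i * d j = d j * d i \<and>
        d i * x j - x j * d i = (if i = j then 1 else 0) \<and>
        g i * x j = x j * g i \<and>
        g i * d j = d j * g i \<and>
        g i * g j + g j * g i = sc (2 * eta i j))"

definition dup :: "nat \<Rightarrow> (nat \<Rightarrow> nat \<Rightarrow> complex) \<Rightarrow> (complex \<Rightarrow> 'a::ring_1) \<Rightarrow>
   (nat \<Rightarrow> 'a) \<Rightarrow> nat \<Rightarrow> 'a" where
  "dup n eta sc d i = (\<Sum>j\<in>{1..n}. sc (eta i j) * d j)"

definition Xop :: "nat \<Rightarrow> (complex \<Rightarrow> 'a::ring_1) \<Rightarrow> (nat \<Rightarrow> 'a) \<Rightarrow> (nat \<Rightarrow> 'a) \<Rightarrow> 'a" where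
  "Xop n sc d g = sc (\<i> / complex_of_real (sqrt 2)) * (\<Sum>i\<in>{1..n}. g i * d i)"

text \<open>Supercommutator ad(X)(b) = Xb - (-1)^|b| bX for b homogeneous of parity par.\<close>
definition sad :: "'a::ring_1 \<Rightarrow> 'a \<Rightarrow> nat \<Rightarrow> 'a" where
  "sad X b par = X * b - (-1) ^ par * b * X"

text \<open>The summand T_sigma; indices i_1..i_m are idx 1, ..., idx m, and m = 2a+p+q+t.\<close>
definition Tsig :: "nat \<Rightarrow> (nat \<Rightarrow> nat \<Rightarrow> complex) \<Rightarrow> (complex \<Rightarrow> 'a::ring_1) \<Rightarrow>
   (nat \<Rightarrow> 'a) \<Rightarrow> (nat \<Rightarrow> 'a) \<Rightarrow> (nat \<Rightarrow> 'a) \<Rightarrow>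
   nat \<Rightarrow> nat \<Rightarrow> nat \<Rightarrow> nat \<Rightarrow> (nat \<Rightarrow> nat) \<Rightarrow> (nat \<Rightarrow> nat) \<Rightarrow> 'a" where
  "Tsig n eta sc x d g a p q t idx \<sigma> =
     prod_list (map (\<lambda>k. sc (eta (idx (\<sigma> (2*k+1))) (idx (\<sigma> (2*k+2))))) [0..<a]) *
     prod_list (map (\<lambda>k. x (idx (\<sigma> k))) [2*a+1..<2*a+p+1]) *
     prod_list (map (\<lambda>k. g (idx (\<sigma> k))) [2*a+p+1..<2*a+p+q+1]) *
     prod_list (map (\<lambda>k. dup n eta sc d (idx (\<sigma> k))) [2*a+p+q+1..<2*a+p+q+t+1])"

text \<open>The bracket symbol [eta^a x^p gamma^q partial^t; i_1,...,i_m], m = 2a+p+q+t.\<close>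
definition bracket :: "nat \<Rightarrow> (nat \<Rightarrow> nat \<Rightarrow> complex) \<Rightarrow> (complex \<Rightarrow> 'a::ring_1) \<Rightarrow>
   (nat \<Rightarrow> 'a) \<Rightarrow> (nat \<Rightarrow> 'a) \<Rightarrow> (nat \<Rightarrow> 'a) \<Rightarrow>
   nat \<Rightarrow> nat \<Rightarrow> nat \<Rightarrow> nat \<Rightarrow> (nat \<Rightarrow> nat) \<Rightarrow> 'a" where
  "bracket n eta sc x d g a p q t idx =
     sc (1 / (2 ^ a * fact a * fact p * fact t)) *
     (\<Sum>\<sigma> | \<sigma> permutes {1..2*a+p+q+t}. Tsig n eta sc x d g a p q t idx \<sigma>)"

end

theory Submission
  imports Defs
begin

definition rho2 :: "nat \<Rightarrow> nat \<Rightarrow> nat \<Rightarrow> nat \<Rightarrow> nat" where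
  "rho2 a k hi l = (if l = 2*a+1 then k else if l = 2*a+2 then hi
     else if 2*a+3 \<le> l \<and> l < k+2 then l-2 else if k+2 \<le> l \<and> l < hi+1 then l-1 else l)"

lemma rho2_permutes:
  assumes "2*a+1 \<le> k" "k < hi" "hi \<le> m"
  shows "rho2 a k hi permutes {1..m}"
proof (rule inj_imp_permutes)
  show "inj_on (rho2 a k hi) {1..m}" unfolding inj_on_def rho2_def using assms by auto
qed (use assms in \<open>auto simp: rho2_def\<close>)


lemma prod_shift:
  assumes "\<And>l. lo \<le> l \<Longrightarrow> l < hi \<Longrightarrow> h l = h' (l + c)"
  shows "prod_list (map h [lo..<hi]) = prod_list (map h' [lo+c..<hi+c])"
  using assms
proof (induction hi)
  case 0
  then show ?case by simp
next
  case (Suc hi)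
  show ?case
  proof (cases "lo \<le> hi")
    case True
    have "prod_list (map h [lo..<Suc hi]) = prod_list (map h [lo..<hi]) * h hi"
      using True by simp
    also have "\<dots> = prod_list (map h' [lo+c..<hi+c]) * h' (hi + c)"
      using Suc Suc.prems[of hi] True by simp
    also have "\<dots> = prod_list (map h' [lo+c..<Suc hi+c])" using True by simp
    finally show ?thesis .
  next
    case False
    then show ?thesis by simp
  qed
qed

lemma prod_cong_upt:
  assumes "\<And>l. lo \<le> l \<Longrightarrow> l < hi \<Longrightarrow> h l = h' l"
  shows "prod_list (map h [lo..<hi]) = prod_list (map h' [lo..<hi])"
  using assms by (intro arg_cong[where f=prod_list] map_cong) auto

lemma prod_split_upt:
  assumes "lo \<le> k" "k \<le> hi"
  shows "prod_list (map h [lo..<hi]) = prod_list (map h [lo..<k]) * prod_list (map h [k..<hi])"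
proof -
  have "[lo..<hi] = [lo..<k] @ [k..<hi]" using assms
    by (metis le_Suc_ex upt_add_eq_append)
  then show ?thesis by simp
qed

definition cyc :: "nat \<Rightarrow> nat \<Rightarrow> nat \<Rightarrow> nat" where
  "cyc k e l = (if k \<le> l \<and> l < e then Suc l else if l = e then k else l)"

lemma cyc_permutes:
  assumes "1 \<le> k" "k \<le> e" "e \<le> m"
  shows "cyc k e permutes {1..m}"
proof (rule inj_imp_permutes)
  show "inj_on (cyc k e) {1..m}" unfolding inj_on_def cyc_def using assms by auto
qed (use assms in \<open>auto simp: cyc_def\<close>)

locale wc =
  fixes n :: nat and eta :: "nat \<Rightarrow> nat \<Rightarrow> complex" and sc :: "complex \<Rightarrow> 'a::ring_1"
    and x d g :: "nat \<Rightarrow> 'a"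
  assumes hom: "complex_alg_hom sc"
    and rels: "weyl_clifford_rels n eta sc x d g"
    and sym: "\<forall>i\<in>{1..n}. \<forall>j\<in>{1..n}. eta i j = eta j i"
begin

lemma sc_central: "sc z * b = b * sc z" using hom unfolding complex_alg_hom_def by blast
lemma sc_add: "sc (z + w) = sc z + sc w" using hom unfolding complex_alg_hom_def by blast
lemma sc_mult: "sc (z * w) = sc z * sc w" using hom unfolding complex_alg_hom_def by blast
lemma sc_1: "sc 1 = 1" using hom unfolding complex_alg_hom_def by blast
lemma sc_0: "sc 0 = 0"
proof -
  have "sc 0 = sc 0 + sc 0" using sc_add[of 0 0] by simp
  then show ?thesis by simp
qed
lemma sc_of_nat: "sc (of_nat k) = of_nat k"
  by (induction k) (simp_all add: sc_0 sc_add sc_1)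
lemma sc_2: "sc 2 = 2"
  using sc_of_nat[of 2] by simp
lemma sc_half: "sc (1/2) * 2 = 1"
proof -
  have "sc (1/2) * 2 = sc (1/2) * sc 2" by (simp only: sc_2)
  also have "\<dots> = sc (1/2 * 2)" by (simp only: sc_mult)
  also have "(1/2 * 2 :: complex) = 1" by simp
  finally show ?thesis by (simp only: sc_1)
qed

lemma cancel2: assumes "2 * (y::'a) = 2 * z" shows "y = z"
proof -
  have "y = (sc (1/2) * 2) * y" by (simp only: sc_half mult_1_left)
  also have "\<dots> = sc (1/2) * (2 * z)" using assms by (simp only: mult.assoc)
  also have "\<dots> = (sc (1/2) * 2) * z" by (simp only: mult.assoc)
  also have "\<dots> = z" by (simp only: sc_half mult_1_left)
  finally show ?thesis .
qed

lemma rels_at: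
  assumes "i \<in> {1..n}" "j \<in> {1..n}"
  shows "x i * x j = x j * x i \<and> d i * d j = d j * d i \<and>
        d i * x j - x j * d i = (if i = j then 1 else 0) \<and>
        g i * x j = x j * g i \<and> g i * d j = d j * g i \<and>
        g i * g j + g j * g i = sc (2 * eta i j)"
proof -
  have "\<forall>i\<in>{1..n}. \<forall>j\<in>{1..n}.
        x i * x j = x j * x i \<and> d i * d j = d j * d i \<and>
        d i * x j - x j * d i = (if i = j then 1 else 0) \<and>
        g i * x j = x j * g i \<and> g i * d j = d j * g i \<and>
        g i * g j + g j * g i = sc (2 * eta i j)"
    using rels unfolding weyl_clifford_rels_def .
  then show ?thesis using assms by blast
qed

lemma xx: "i \<in> {1..n} \<Longrightarrow> j \<in> {1..n} \<Longrightarrow> x i * x j = x j * x i"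
  using rels_at by blast
lemma dd: "i \<in> {1..n} \<Longrightarrow> j \<in> {1..n} \<Longrightarrow> d i * d j = d j * d i"
  using rels_at by blast
lemma dx: "i \<in> {1..n} \<Longrightarrow> j \<in> {1..n} \<Longrightarrow> d i * x j = x j * d i + (if i = j then 1 else 0)"
proof -
  assume "i \<in> {1..n}" "j \<in> {1..n}"
  then have "d i * x j - x j * d i = (if i = j then 1 else 0)" using rels_at by blast
  then show ?thesis by (simp add: algebra_simps flip: \<open>d i * x j - x j * d i = (if i = j then 1 else 0)\<close>)
qed
lemma gx: "i \<in> {1..n} \<Longrightarrow> j \<in> {1..n} \<Longrightarrow> g i * x j = x j * g i"
  using rels_at by blast
lemma gd: "i \<in> {1..n} \<Longrightarrow> j \<in> {1..n} \<Longrightarrow> g i * d j = d j * g i"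
  using rels_at by blast
lemma gg: "i \<in> {1..n} \<Longrightarrow> j \<in> {1..n} \<Longrightarrow> g i * g j + g j * g i = sc (2 * eta i j)"
  using rels_at by blast

definition "D = (\<Sum>i\<in>{1..n}. g i * d i)"

lemma D_sc: "D * sc z = sc z * D" by (simp add: sc_central)

lemma D_d: assumes "j \<in> {1..n}" shows "D * d j = d j * D"
proof -
  have "D * d j = (\<Sum>i\<in>{1..n}. g i * d i * d j)" by (simp add: D_def sum_distrib_right)
  also have "\<dots> = (\<Sum>i\<in>{1..n}. d j * (g i * d i))"
  proof (intro sum.cong refl)
    fix i assume i: "i \<in> {1..n}"
    have "g i * d i * d j = g i * (d j * d i)" by (simp only: mult.assoc dd[OF i assms])
    also have "\<dots> = (g i * d j) * d i" by (simp only: mult.assoc)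
    also have "\<dots> = d j * (g i * d i)" by (simp only: gd[OF i assms] mult.assoc)
    finally show "g i * d i * d j = d j * (g i * d i)" .
  qed
  also have "\<dots> = d j * D" by (simp add: D_def sum_distrib_left)
  finally show ?thesis .
qed

lemma D_dup: assumes "j \<in> {1..n}" shows "D * dup n eta sc d j = dup n eta sc d j * D"
proof -
  have "D * dup n eta sc d j = (\<Sum>l\<in>{1..n}. D * (sc (eta j l) * d l))"
    by (simp add: dup_def sum_distrib_left)
  also have "\<dots> = (\<Sum>l\<in>{1..n}. (sc (eta j l) * d l) * D)"
  proof (intro sum.cong refl)
    fix l assume l: "l \<in> {1..n}"
    have "D * (sc (eta j l) * d l) = sc (eta j l) * (D * d l)" by (simp only: D_sc flip: mult.assoc)
    also have "\<dots> = (sc (eta j l) * d l) * D" by (simp only: D_d[OF l] mult.assoc)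
    finally show "D * (sc (eta j l) * d l) = (sc (eta j l) * d l) * D" .
  qed
  also have "\<dots> = dup n eta sc d j * D" by (simp add: dup_def sum_distrib_right)
  finally show ?thesis .
qed

lemma D_x: assumes "j \<in> {1..n}" shows "D * x j = x j * D + g j"
proof -
  have "D * x j = (\<Sum>i\<in>{1..n}. g i * (d i * x j))" by (simp add: D_def sum_distrib_right mult.assoc)
  also have "\<dots> = (\<Sum>i\<in>{1..n}. x j * (g i * d i) + (if i = j then g j else 0))"
  proof (intro sum.cong refl)
    fix i assume i: "i \<in> {1..n}"
    have "g i * (d i * x j) = g i * (x j * d i) + g i * (if i = j then 1 else 0)"
      using i assms by (simp add: dx distrib_left)
    also have "g i * (x j * d i) = x j * (g i * d i)" by (simp only: gx[OF i assms] flip: mult.assoc)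
    finally show "g i * (d i * x j) = x j * (g i * d i) + (if i = j then g j else 0)" by simp
  qed
  also have "\<dots> = x j * D + g j" using assms by (simp add: D_def sum.distrib sum_distrib_left)
  finally show ?thesis .
qed

lemma D_g_anti: assumes "j \<in> {1..n}" shows "D * g j + g j * D = 2 * dup n eta sc d j"
proof -
  have "D * g j + g j * D = (\<Sum>i\<in>{1..n}. g i * d i * g j + g j * (g i * d i))"
    by (simp add: D_def sum_distrib_right sum_distrib_left sum.distrib)
  also have "\<dots> = (\<Sum>i\<in>{1..n}. 2 * (sc (eta j i) * d i))"
  proof (intro sum.cong refl)
    fix i assume i: "i \<in> {1..n}"
    have "g i * d i * g j + g j * (g i * d i) = (g i * g j + g j * g i) * d i"
      by (simp only: distrib_right mult.assoc gd[OF assms i])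
    also have "\<dots> = 2 * (sc (eta j i) * d i)"
    proof -
      have e: "eta i j = eta j i" using sym i assms by blast
      show ?thesis by (simp only: gg[OF i assms] sc_mult sc_2 mult.assoc e)
    qed
    finally show "g i * d i * g j + g j * (g i * d i) = 2 * (sc (eta j i) * d i)" .
  qed
  also have "\<dots> = 2 * dup n eta sc d j" by (simp add: dup_def sum_distrib_left)
  finally show ?thesis .
qed

lemma prod_list_comm: "(\<And>z. z \<in> set zs \<Longrightarrow> z * y = y * z) \<Longrightarrow> prod_list zs * y = y * prod_list (zs::'b::monoid_mult list)"
proof (induction zs)
  case Nil then show ?case by simp
next
  case (Cons z zs)
  have "prod_list (z # zs) * y = z * (prod_list zs * y)" by (simp add: mult.assoc)
  also have "\<dots> = z * (y * prod_list zs)" using Cons by simp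
  also have "\<dots> = y * prod_list (z # zs)" using Cons.prems[of z] by (simp flip: mult.assoc)
  finally show ?case .
qed

definition "Eb a f = prod_list (map (\<lambda>k. sc (eta (f (2*k+1)) (f (2*k+2)))) [0..<a])"
definition "Xb lo hi f = prod_list (map (\<lambda>k. x (f k)) [lo..<hi])"
definition "Gb lo hi f = prod_list (map (\<lambda>k. g (f k)) [lo..<hi])"
definition "Db lo hi f = prod_list (map (\<lambda>k. dup n eta sc d (f k)) [lo..<hi])"

lemma Tsig_eq: "Tsig n eta sc x d g a p q t idx \<sigma> =
  Eb a (\<lambda>k. idx (\<sigma> k)) * Xb (2*a+1) (2*a+p+1) (\<lambda>k. idx (\<sigma> k)) *
  Gb (2*a+p+1) (2*a+p+q+1) (\<lambda>k. idx (\<sigma> k)) * Db (2*a+p+q+1) (2*a+p+q+t+1) (\<lambda>k. idx (\<sigma> k))"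
  by (simp add: Tsig_def Eb_def Xb_def Gb_def Db_def)

lemma Eb_central: "Eb a f * y = y * Eb a f"
  unfolding Eb_def by (rule prod_list_comm) (auto simp: sc_central)

lemma g_Xb: assumes "j \<in> {1..n}" "f ` {lo..<hi} \<subseteq> {1..n}"
  shows "g j * Xb lo hi f = Xb lo hi f * g j"
  unfolding Xb_def by (rule prod_list_comm[symmetric]) (use assms in \<open>auto intro!: gx[symmetric]\<close>)

lemma D_Db: assumes "f ` {lo..<hi} \<subseteq> {1..n}"
  shows "D * Db lo hi f = Db lo hi f * D"
  unfolding Db_def by (rule prod_list_comm[symmetric]) (use assms in \<open>auto intro!: D_dup[symmetric]\<close>)

lemma D_Xb: assumes "f ` {lo..<hi} \<subseteq> {1..n}" "lo \<le> hi"
  shows "D * Xb lo hi f = Xb lo hi f * D + (\<Sum>k\<in>{lo..<hi}. g (f k) * (Xb lo k f * Xb (Suc k) hi f))"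
  using assms
proof (induction hi)
  case 0
  then show ?case by (simp add: Xb_def)
next
  case (Suc h)
  show ?case
  proof (cases "lo = Suc h")
    case True
    then show ?thesis by (simp add: Xb_def)
  next
    case False
    then have lh: "lo \<le> h" using Suc.prems by simp
    have v: "f ` {lo..<h} \<subseteq> {1..n}" using Suc.prems by auto
    have fh: "f h \<in> {1..n}" using Suc.prems(1) lh by (auto simp: image_subset_iff)
    have ih: "D * Xb lo h f = Xb lo h f * D + (\<Sum>k\<in>{lo..<h}. g (f k) * (Xb lo k f * Xb (Suc k) h f))"
      using Suc.IH v lh by blast
    have split: "Xb lo (Suc h) f = Xb lo h f * x (f h)" using lh by (simp add: Xb_def)
    have split2: "Xb (Suc k) (Suc h) f = Xb (Suc k) h f * x (f h)" if "k \<in> {lo..<h}" for k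
      using that by (simp add: Xb_def)
    have "D * Xb lo (Suc h) f = (D * Xb lo h f) * x (f h)" by (simp add: split mult.assoc)
    also have "\<dots> = Xb lo h f * (D * x (f h)) + (\<Sum>k\<in>{lo..<h}. g (f k) * (Xb lo k f * Xb (Suc k) h f)) * x (f h)"
      by (simp add: ih distrib_right mult.assoc)
    also have "\<dots> = Xb lo h f * x (f h) * D + Xb lo h f * g (f h) + (\<Sum>k\<in>{lo..<h}. g (f k) * (Xb lo k f * Xb (Suc k) (Suc h) f))"
      by (simp add: D_x[OF fh] distrib_left sum_distrib_right split2 mult.assoc)
    also have "Xb lo h f * g (f h) = g (f h) * (Xb lo h f * Xb (Suc h) (Suc h) f)"
      using g_Xb[OF fh v] by (simp add: Xb_def)
    finally show ?thesis using lh by (simp add: split add.commute add.left_commute)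
  qed
qed



lemma Eb_cong: "(\<And>l. l \<le> 2*a \<Longrightarrow> f l = f' l) \<Longrightarrow> Eb a f = Eb a f'"
  unfolding Eb_def by (intro prod_cong_upt) auto

lemma Db_cong: "(\<And>l. lo \<le> l \<Longrightarrow> l < hi \<Longrightarrow> f l = f' l) \<Longrightarrow> Db lo hi f = Db lo hi f'"
  unfolding Db_def by (intro prod_cong_upt) auto

lemma g_Xb2: assumes "j \<in> {1..n}" "f ` {lo..<hi} \<subseteq> {1..n}" "f ` {lo'..<hi'} \<subseteq> {1..n}"
  shows "g j * (Xb lo hi f * Xb lo' hi' f) = Xb lo hi f * Xb lo' hi' f * g j"
proof -
  have "g j * (Xb lo hi f * Xb lo' hi' f) = (g j * Xb lo hi f) * Xb lo' hi' f" by (simp only: mult.assoc)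
  also have "\<dots> = Xb lo hi f * (g j * Xb lo' hi' f)" by (simp only: g_Xb[OF assms(1,2)] mult.assoc)
  also have "\<dots> = Xb lo hi f * Xb lo' hi' f * g j" by (simp only: g_Xb[OF assms(1,3)] mult.assoc)
  finally show ?thesis .
qed

lemma r0_pointwise:
  assumes sig: "\<sigma> permutes {1..m}" and idx: "\<forall>k\<in>{1..m}. idx k \<in> {1..n}"
    and m: "m = 2*a + Suc s' + t"
  shows "D * Tsig n eta sc x d g a (Suc s') 0 t idx \<sigma> - Tsig n eta sc x d g a (Suc s') 0 t idx \<sigma> * D
     = (\<Sum>k\<in>{2*a+1..<2*a+s'+2}. Tsig n eta sc x d g a s' 1 t idx (\<sigma> \<circ> cyc k (2*a+s'+1)))"
proof -
  define f where "f = (\<lambda>k. idx (\<sigma> k))"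
  define lo where "lo = 2*a+1"
  define e where "e = 2*a+s'+1"
  define hi where "hi = Suc e"
  define M where "M = m+1"
  have lohi: "lo \<le> hi" "1 \<le> lo" "hi \<le> M" by (simp_all add: lo_def hi_def e_def M_def m)
  have valid: "f ` {l1..<l2} \<subseteq> {1..n}" if "1 \<le> l1" "l2 \<le> M" for l1 l2
    using that idx permutes_in_image[OF sig] unfolding f_def M_def by (auto simp: image_subset_iff)
  define E where "E = Eb a f"
  define X where "X = Xb lo hi f"
  define Dd where "Dd = Db hi M f"
  define S where "S = (\<Sum>k\<in>{lo..<hi}. g (f k) * (Xb lo k f * Xb (Suc k) hi f))"
  have T0: "Tsig n eta sc x d g a (Suc s') 0 t idx \<sigma> = E * X * Dd"
    by (simp add: Tsig_eq f_def e_def m Gb_def E_def X_def Dd_def lo_def hi_def M_def)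
  have DE: "D * E = E * D" unfolding E_def by (rule Eb_central[symmetric])
  have DDd: "D * Dd = Dd * D" unfolding Dd_def using valid[of hi M] lohi by (intro D_Db) auto
  have DX: "D * X = X * D + S" unfolding X_def S_def using lohi valid[of lo hi] by (intro D_Xb) auto
  have "D * (E * X * Dd) - E * X * Dd * D = E * S * Dd"
  proof -
    have 1: "D * (E * X * Dd) = E * (D * X) * Dd" by (simp add: DE flip: mult.assoc)
    have 2: "E * X * Dd * D = E * (X * D) * Dd" by (simp add: DDd mult.assoc)
    show ?thesis unfolding 1 2 DX by (simp add: distrib_left distrib_right)
  qed
  also have "E * S * Dd = (\<Sum>k\<in>{lo..<hi}. E * (g (f k) * (Xb lo k f * Xb (Suc k) hi f)) * Dd)"
    unfolding S_def by (simp only: sum_distrib_left sum_distrib_right)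
  also have "\<dots> = (\<Sum>k\<in>{2*a+1..<2*a+s'+2}. Tsig n eta sc x d g a s' 1 t idx (\<sigma> \<circ> cyc k (2*a+s'+1)))"
  proof (intro sum.cong)
    show "{lo..<hi} = {2*a+1..<2*a+s'+2}" by (simp add: lo_def hi_def e_def)
  next
    fix k assume k0: "k \<in> {2*a+1..<2*a+s'+2}"
    then have k: "lo \<le> k" "k < hi" "k \<le> e" by (auto simp: lo_def hi_def e_def)
    define f' where "f' = (\<lambda>l. idx ((\<sigma> \<circ> cyc k e) l))"
    have f'f: "f' l = f (cyc k e l)" for l by (simp add: f'_def f_def)
    have T1: "Tsig n eta sc x d g a s' 1 t idx (\<sigma> \<circ> cyc k (2*a+s'+1)) = Eb a f' * Xb lo e f' * Gb e hi f' * Db hi M f'"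
      by (simp add: Tsig_eq f'_def e_def m lo_def hi_def M_def)
    have E': "Eb a f' = E" unfolding E_def using k by (intro Eb_cong) (auto simp: f'f cyc_def lo_def)
    have Dd': "Db hi M f' = Dd" unfolding Dd_def using k by (intro Db_cong) (auto simp: f'f cyc_def hi_def)
    have G: "Gb e hi f' = g (f k)" by (simp add: Gb_def f'f cyc_def hi_def)
    have X': "Xb lo e f' = Xb lo k f * Xb (Suc k) hi f"
    proof -
      have "Xb lo e f' = Xb lo k f' * Xb k e f'"
        unfolding Xb_def using k by (intro prod_split_upt) auto
      also have "Xb lo k f' = Xb lo k f"
        unfolding Xb_def using k by (intro prod_cong_upt) (auto simp: f'f cyc_def)
      also have "Xb k e f' = Xb (k+1) (e+1) f"
        unfolding Xb_def by (intro prod_shift) (auto simp: f'f cyc_def)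
      finally show ?thesis by (simp add: hi_def)
    qed
    have fk: "f k \<in> {1..n}" using valid[of k "Suc k"] k lohi by auto
    have comm: "g (f k) * (Xb lo k f * Xb (Suc k) hi f) = Xb lo k f * Xb (Suc k) hi f * g (f k)"
      using lohi k by (intro g_Xb2[OF fk valid valid]) auto
    show "E * (g (f k) * (Xb lo k f * Xb (Suc k) hi f)) * Dd =
      Tsig n eta sc x d g a s' 1 t idx (\<sigma> \<circ> cyc k (2*a+s'+1))"
      unfolding T1 E' Dd' G X' comm by (simp only: mult.assoc)
  qed
  finally show ?thesis unfolding T0 .
qed

definition "W a lo hi M k f = Eb a f * (g (f k) * g (f hi)) * (Xb lo k f * Xb (Suc k) hi f) * Db (Suc hi) M f"

lemma r1_pointwise:
  assumes sig: "\<sigma> permutes {1..m}" and idx: "\<forall>k\<in>{1..m}. idx k \<in> {1..n}"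
    and m: "m = 2*a + Suc s' + 1 + t"
  shows "D * Tsig n eta sc x d g a (Suc s') 1 t idx \<sigma> + Tsig n eta sc x d g a (Suc s') 1 t idx \<sigma> * D
     = 2 * Tsig n eta sc x d g a (Suc s') 0 (Suc t) idx \<sigma>
       + (\<Sum>k\<in>{2*a+1..<2*a+s'+2}. W a (2*a+1) (2*a+s'+2) (m+1) k (\<lambda>l. idx (\<sigma> l)))"
proof -
  define f where "f = (\<lambda>k. idx (\<sigma> k))"
  define lo where "lo = 2*a+1"
  define hi where "hi = 2*a+s'+2"
  define M where "M = m+1"
  have lohi: "lo \<le> hi" "1 \<le> lo" "Suc hi \<le> M" "hi < M" by (simp_all add: lo_def hi_def M_def m)
  have valid: "f ` {l1..<l2} \<subseteq> {1..n}" if "1 \<le> l1" "l2 \<le> M" for l1 l2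
    using that idx permutes_in_image[OF sig] unfolding f_def M_def by (auto simp: image_subset_iff)
  have fj: "f hi \<in> {1..n}" using valid[of hi "Suc hi"] lohi by auto
  define E where "E = Eb a f"
  define X where "X = Xb lo hi f"
  define gj where "gj = g (f hi)"
  define Dt where "Dt = Db (Suc hi) M f"
  define S where "S = (\<Sum>k\<in>{lo..<hi}. g (f k) * (Xb lo k f * Xb (Suc k) hi f))"
  have T: "Tsig n eta sc x d g a (Suc s') 1 t idx \<sigma> = E * X * gj * Dt"
    by (simp add: Tsig_eq f_def m Gb_def E_def X_def gj_def Dt_def lo_def hi_def M_def)
  have T3: "Tsig n eta sc x d g a (Suc s') 0 (Suc t) idx \<sigma> = E * X * (dup n eta sc d (f hi) * Dt)"
  proof -
    have "Db hi M f = dup n eta sc d (f hi) * Dt"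
      unfolding Db_def Dt_def using lohi by (simp add: upt_conv_Cons)
    then show ?thesis by (simp add: Tsig_eq f_def m Gb_def E_def X_def lo_def hi_def M_def)
  qed
  have DX: "D * X = X * D + S" unfolding X_def S_def using lohi valid[of lo hi] by (intro D_Xb) auto
  have DDt: "D * Dt = Dt * D" unfolding Dt_def using valid[of "Suc hi" M] lohi by (intro D_Db) auto
  have DE: "D * E = E * D" unfolding E_def by (rule Eb_central[symmetric])
  have "D * (E * X * gj * Dt) + E * X * gj * Dt * D = E * X * (D * gj + gj * D) * Dt + E * S * gj * Dt"
  proof -
    have "D * (E * X * gj * Dt) = E * (D * X) * gj * Dt" by (simp add: DE flip: mult.assoc)
    also have "\<dots> = E * X * (D * gj) * Dt + E * S * gj * Dt" by (simp add: DX distrib_left distrib_right mult.assoc)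
    finally have 1: "D * (E * X * gj * Dt) = E * X * (D * gj) * Dt + E * S * gj * Dt" .
    have 2: "E * X * gj * Dt * D = E * X * (gj * D) * Dt" by (simp add: DDt mult.assoc)
    show ?thesis unfolding 1 2 by (simp add: distrib_left distrib_right add.commute add.left_commute)
  qed
  also have "E * X * (D * gj + gj * D) * Dt = 2 * (E * X * (dup n eta sc d (f hi) * Dt))"
    unfolding gj_def D_g_anti[OF fj] by (simp add: mult_2 distrib_left distrib_right mult.assoc)
  also have "E * S * gj * Dt = (\<Sum>k\<in>{2*a+1..<2*a+s'+2}. W a (2*a+1) (2*a+s'+2) (m+1) k f)"
    unfolding S_def sum_distrib_left sum_distrib_right
  proof (intro sum.cong)
    show "{lo..<hi} = {2*a+1..<2*a+s'+2}" by (simp add: lo_def hi_def)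
  next
    fix k assume k0: "k \<in> {2*a+1..<2*a+s'+2}"
    then have k: "lo \<le> k" "k < hi" by (auto simp: lo_def hi_def)
    have "Xb lo k f * Xb (Suc k) hi f * gj = gj * (Xb lo k f * Xb (Suc k) hi f)"
      unfolding gj_def using lohi k by (intro g_Xb2[OF fj valid valid, symmetric]) auto
    then show "E * (g (f k) * (Xb lo k f * Xb (Suc k) hi f)) * gj * Dt = W a (2*a+1) (2*a+s'+2) (m+1) k f"
      unfolding W_def E_def Dt_def gj_def lo_def[symmetric] hi_def[symmetric] M_def[symmetric]
      by (simp add: mult.assoc)
  qed
  finally show ?thesis unfolding T T3 f_def .
qed

lemma W_sum:
  assumes idx: "\<forall>k\<in>{1..m}. idx k \<in> {1..n}"
    and m: "m = 2*a + Suc s' + 1 + t" and lo: "lo = 2*a+1" and hi: "hi = 2*a+s'+2" and M: "M = m+1"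
    and k: "lo \<le> k" "k < hi"
  shows "(\<Sum>\<sigma> | \<sigma> permutes {1..m}. W a lo hi M k (\<lambda>l. idx (\<sigma> l)))
       = (\<Sum>\<sigma> | \<sigma> permutes {1..m}. Tsig n eta sc x d g (a+1) s' 0 t idx (\<sigma> \<circ> rho2 a k hi))"
proof -
  define V where "V = (\<lambda>f. Eb a f * sc (eta (f k) (f hi)) * (Xb lo k f * Xb (Suc k) hi f) * Db (Suc hi) M f)"
  define W' where "W' = (\<lambda>f. Eb a f * (g (f hi) * g (f k)) * (Xb lo k f * Xb (Suc k) hi f) * Db (Suc hi) M f)"
  let ?P = "{\<sigma>. \<sigma> permutes {1..m}}"
  have hm: "hi \<le> m" "lo \<ge> 1" using m hi lo by auto
  have tau: "transpose k hi permutes {1..m}" using k hm by (intro permutes_swap_id) auto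
  have fv: "idx (\<sigma> l) \<in> {1..n}" if "\<sigma> permutes {1..m}" "l \<in> {1..m}" for \<sigma> l
  proof -
    have "\<sigma> l \<in> {1..m}" using permutes_in_image[OF that(1)] that(2) by simp
    then show ?thesis using idx by blast
  qed
  have 1: "(\<Sum>\<sigma>\<in>?P. W a lo hi M k (\<lambda>l. idx (\<sigma> l))) = (\<Sum>\<sigma>\<in>?P. W' (\<lambda>l. idx (\<sigma> l)))"
  proof -
    have "(\<Sum>\<sigma>\<in>?P. W a lo hi M k (\<lambda>l. idx (\<sigma> l))) = (\<Sum>\<sigma>\<in>?P. W a lo hi M k (\<lambda>l. idx ((\<sigma> \<circ> transpose k hi) l)))"
      by (rule sum_permutations_compose_right[OF tau])
    also have "\<dots> = (\<Sum>\<sigma>\<in>?P. W' (\<lambda>l. idx (\<sigma> l)))"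
    proof (intro sum.cong refl)
      fix \<sigma> :: "nat \<Rightarrow> nat"
      define f where "f = (\<lambda>l. idx (\<sigma> l))"
      have ft: "(\<lambda>l. idx ((\<sigma> \<circ> transpose k hi) l)) = (\<lambda>l. f (transpose k hi l))"
        by (simp add: f_def)
      have E: "Eb a (\<lambda>l. f (transpose k hi l)) = Eb a f" using k lo
        by (intro Eb_cong) (auto simp: transpose_def)
      have Dd: "Db (Suc hi) M (\<lambda>l. f (transpose k hi l)) = Db (Suc hi) M f" using k
        by (intro Db_cong) (auto simp: transpose_def)
      have X1: "Xb lo k (\<lambda>l. f (transpose k hi l)) = Xb lo k f" using k
        unfolding Xb_def by (intro prod_cong_upt) (auto simp: transpose_def)
      have X2: "Xb (Suc k) hi (\<lambda>l. f (transpose k hi l)) = Xb (Suc k) hi f" using k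
        unfolding Xb_def by (intro prod_cong_upt) (auto simp: transpose_def)
      have t1: "transpose k hi k = hi" "transpose k hi hi = k" by simp_all
      have "W a lo hi M k (\<lambda>l. idx ((\<sigma> \<circ> transpose k hi) l)) = W a lo hi M k (\<lambda>l. f (transpose k hi l))"
        unfolding ft ..
      also have "\<dots> = W' f" unfolding W_def W'_def E Dd X1 X2 by (simp only: t1)
      finally show "W a lo hi M k (\<lambda>l. idx ((\<sigma> \<circ> transpose k hi) l)) = W' (\<lambda>l. idx (\<sigma> l))"
        unfolding f_def .
    qed
    finally show ?thesis .
  qed
  have 2: "W a lo hi M k (\<lambda>l. idx (\<sigma> l)) + W' (\<lambda>l. idx (\<sigma> l)) = 2 * V (\<lambda>l. idx (\<sigma> l))"
    if "\<sigma> \<in> ?P" for \<sigma>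
  proof -
    define f where "f = (\<lambda>l. idx (\<sigma> l))"
    have a1: "f k \<in> {1..n}" using that k hm fv unfolding f_def by auto
    have a2: "f hi \<in> {1..n}" using that k hm fv unfolding f_def by auto
    define E where "E = Eb a f"
    define XX where "XX = Xb lo k f * Xb (Suc k) hi f"
    define Dt where "Dt = Db (Suc hi) M f"
    have "W a lo hi M k f + W' f = E * (g (f k) * g (f hi) + g (f hi) * g (f k)) * XX * Dt"
      unfolding W_def W'_def E_def XX_def Dt_def by (simp add: distrib_left distrib_right)
    also have "\<dots> = E * (2 * sc (eta (f k) (f hi))) * XX * Dt"
      unfolding gg[OF a1 a2] sc_mult sc_2 ..
    also have "\<dots> = 2 * V f"
      unfolding V_def E_def XX_def Dt_def by (simp add: mult_2 distrib_left distrib_right mult.assoc)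
    finally show ?thesis unfolding f_def .
  qed
  have 3: "V (\<lambda>l. idx (\<sigma> l)) = Tsig n eta sc x d g (a+1) s' 0 t idx (\<sigma> \<circ> rho2 a k hi)" for \<sigma>
  proof -
    define f where "f = (\<lambda>l. idx (\<sigma> l))"
    define f' where "f' = (\<lambda>l. idx ((\<sigma> \<circ> rho2 a k hi) l))"
    have f'f: "f' l = f (rho2 a k hi l)" for l by (simp add: f'_def f_def)
    have T: "Tsig n eta sc x d g (a+1) s' 0 t idx (\<sigma> \<circ> rho2 a k hi) =
      Eb (a+1) f' * Xb (lo+2) (Suc hi) f' * Db (Suc hi) M f'"
      by (simp add: Tsig_eq f'_def m Gb_def lo hi M)
    have E: "Eb (a+1) f' = Eb a f * sc (eta (f k) (f hi))"
    proof -
      have "Eb (a+1) f' = Eb a f' * sc (eta (f' (2*a+1)) (f' (2*a+2)))" by (simp add: Eb_def)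
      also have "Eb a f' = Eb a f" by (intro Eb_cong) (use k lo in \<open>auto simp: f'f rho2_def\<close>)
      also have "f' (2*a+1) = f k" by (simp add: f'f rho2_def)
      also have "f' (2*a+2) = f hi" by (simp add: f'f rho2_def)
      finally show ?thesis .
    qed
    have Dd: "Db (Suc hi) M f' = Db (Suc hi) M f"
      by (intro Db_cong) (use k lo in \<open>auto simp: f'f rho2_def\<close>)
    have X: "Xb (lo+2) (Suc hi) f' = Xb lo k f * Xb (Suc k) hi f"
    proof -
      have S: "Xb (lo+2) (Suc hi) f' = Xb (lo+2) (k+2) f' * Xb (k+2) (Suc hi) f'"
        unfolding Xb_def using k by (intro prod_split_upt) auto
      have A: "Xb lo k f = Xb (lo+2) (k+2) f'"
        unfolding Xb_def using lo by (intro prod_shift) (auto simp: f'f rho2_def)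
      have B: "Xb (Suc k) hi f = Xb (Suc k + 1) (hi+1) f'"
        unfolding Xb_def using k lo by (intro prod_shift) (auto simp: f'f rho2_def)
      have B': "Xb (Suc k) hi f = Xb (k+2) (Suc hi) f'" using B by simp
      show ?thesis unfolding S A B' ..
    qed
    show ?thesis unfolding T E Dd X V_def f_def by (simp add: mult.assoc)
  qed
  have "2 * (\<Sum>\<sigma>\<in>?P. W a lo hi M k (\<lambda>l. idx (\<sigma> l))) = 2 * (\<Sum>\<sigma>\<in>?P. V (\<lambda>l. idx (\<sigma> l)))"
  proof -
    have "2 * (\<Sum>\<sigma>\<in>?P. W a lo hi M k (\<lambda>l. idx (\<sigma> l))) =
        (\<Sum>\<sigma>\<in>?P. W a lo hi M k (\<lambda>l. idx (\<sigma> l))) + (\<Sum>\<sigma>\<in>?P. W' (\<lambda>l. idx (\<sigma> l)))"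
      unfolding 1 by (simp only: mult_2)
    also have "\<dots> = (\<Sum>\<sigma>\<in>?P. 2 * V (\<lambda>l. idx (\<sigma> l)))"
      unfolding sum.distrib[symmetric] by (intro sum.cong refl 2)
    finally show ?thesis by (simp only: sum_distrib_left)
  qed
  then have "(\<Sum>\<sigma>\<in>?P. W a lo hi M k (\<lambda>l. idx (\<sigma> l))) = (\<Sum>\<sigma>\<in>?P. V (\<lambda>l. idx (\<sigma> l)))"
    by (rule cancel2)
  then show ?thesis unfolding 3 .
qed

lemma sum_r0:
  assumes idx: "\<forall>k\<in>{1..m}. idx k \<in> {1..n}" and m: "m = 2*a + Suc s' + t"
  shows "(\<Sum>\<sigma> | \<sigma> permutes {1..m}. D * Tsig n eta sc x d g a (Suc s') 0 t idx \<sigma> - Tsig n eta sc x d g a (Suc s') 0 t idx \<sigma> * D)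
    = of_nat (Suc s') * (\<Sum>\<sigma> | \<sigma> permutes {1..m}. Tsig n eta sc x d g a s' 1 t idx \<sigma>)"
proof -
  let ?P = "{\<sigma>. \<sigma> permutes {1..m}}"
  let ?T1 = "Tsig n eta sc x d g a s' 1 t idx"
  define K where "K = {2*a+1..<2*a+s'+2}"
  have cK: "card K = Suc s'" by (simp add: K_def)
  have "(\<Sum>\<sigma>\<in>?P. D * Tsig n eta sc x d g a (Suc s') 0 t idx \<sigma> - Tsig n eta sc x d g a (Suc s') 0 t idx \<sigma> * D)
     = (\<Sum>\<sigma>\<in>?P. \<Sum>k\<in>K. ?T1 (\<sigma> \<circ> cyc k (2*a+s'+1)))"
    unfolding K_def using r0_pointwise[OF _ idx m] by (intro sum.cong refl) auto
  also have "\<dots> = (\<Sum>k\<in>K. \<Sum>\<sigma>\<in>?P. ?T1 (\<sigma> \<circ> cyc k (2*a+s'+1)))"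
    by (rule sum.swap)
  also have "\<dots> = (\<Sum>k\<in>K. \<Sum>\<sigma>\<in>?P. ?T1 \<sigma>)"
  proof (rule sum.cong[OF refl])
    fix k assume k: "k \<in> K"
    have "cyc k (2*a+s'+1) permutes {1..m}" using k m unfolding K_def by (intro cyc_permutes) auto
    then show "(\<Sum>\<sigma>\<in>?P. ?T1 (\<sigma> \<circ> cyc k (2*a+s'+1))) = (\<Sum>\<sigma>\<in>?P. ?T1 \<sigma>)"
      by (rule sum_permutations_compose_right[where f="?T1", symmetric])
  qed
  also have "\<dots> = of_nat (Suc s') * (\<Sum>\<sigma>\<in>?P. ?T1 \<sigma>)" by (simp only: sum_constant cK of_nat_mult)
  finally show ?thesis .
qed

lemma sum_r1:
  assumes idx: "\<forall>k\<in>{1..m}. idx k \<in> {1..n}" and m: "m = 2*a + Suc s' + 1 + t"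
  shows "(\<Sum>\<sigma> | \<sigma> permutes {1..m}. D * Tsig n eta sc x d g a (Suc s') 1 t idx \<sigma> + Tsig n eta sc x d g a (Suc s') 1 t idx \<sigma> * D)
    = 2 * (\<Sum>\<sigma> | \<sigma> permutes {1..m}. Tsig n eta sc x d g a (Suc s') 0 (Suc t) idx \<sigma>)
      + of_nat (Suc s') * (\<Sum>\<sigma> | \<sigma> permutes {1..m}. Tsig n eta sc x d g (a+1) s' 0 t idx \<sigma>)"
proof -
  let ?P = "{\<sigma>. \<sigma> permutes {1..m}}"
  let ?T2 = "Tsig n eta sc x d g (a+1) s' 0 t idx"
  let ?T3 = "Tsig n eta sc x d g a (Suc s') 0 (Suc t) idx"
  define K where "K = {2*a+1..<2*a+s'+2}"
  define lo where "lo = 2*a+1"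
  define hi where "hi = 2*a+s'+2"
  define M where "M = m+1"
  have cK: "card K = Suc s'" by (simp add: K_def)
  have "(\<Sum>\<sigma>\<in>?P. D * Tsig n eta sc x d g a (Suc s') 1 t idx \<sigma> + Tsig n eta sc x d g a (Suc s') 1 t idx \<sigma> * D)
     = (\<Sum>\<sigma>\<in>?P. 2 * ?T3 \<sigma> + (\<Sum>k\<in>K. W a lo hi M k (\<lambda>l. idx (\<sigma> l))))"
    unfolding K_def lo_def hi_def M_def using r1_pointwise[OF _ idx m] by (intro sum.cong refl) auto
  also have "\<dots> = 2 * (\<Sum>\<sigma>\<in>?P. ?T3 \<sigma>) + (\<Sum>k\<in>K. \<Sum>\<sigma>\<in>?P. W a lo hi M k (\<lambda>l. idx (\<sigma> l)))"
    by (simp only: sum.distrib sum_distrib_left sum.swap[of _ ?P])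
  also have "(\<Sum>k\<in>K. \<Sum>\<sigma>\<in>?P. W a lo hi M k (\<lambda>l. idx (\<sigma> l))) = (\<Sum>k\<in>K. \<Sum>\<sigma>\<in>?P. ?T2 \<sigma>)"
  proof (rule sum.cong[OF refl])
    fix k assume k: "k \<in> K"
    then have k': "lo \<le> k" "k < hi" by (auto simp: K_def lo_def hi_def)
    have p: "rho2 a k hi permutes {1..m}" using k' m unfolding lo_def hi_def by (intro rho2_permutes) auto
    have "(\<Sum>\<sigma>\<in>?P. W a lo hi M k (\<lambda>l. idx (\<sigma> l))) = (\<Sum>\<sigma>\<in>?P. ?T2 (\<sigma> \<circ> rho2 a k hi))"
      by (rule W_sum[OF idx m lo_def hi_def M_def k'])
    also have "\<dots> = (\<Sum>\<sigma>\<in>?P. ?T2 \<sigma>)" by (rule sum_permutations_compose_right[OF p, where f="?T2", symmetric])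
    finally show "(\<Sum>\<sigma>\<in>?P. W a lo hi M k (\<lambda>l. idx (\<sigma> l))) = (\<Sum>\<sigma>\<in>?P. ?T2 \<sigma>)" .
  qed
  also have "\<dots> = of_nat (Suc s') * (\<Sum>\<sigma>\<in>?P. ?T2 \<sigma>)" by (simp only: sum_constant cK of_nat_mult)
  finally show ?thesis .
qed


end

theorem lemma5p2:
  fixes n m a s r t :: nat
    and eta :: "nat \<Rightarrow> nat \<Rightarrow> complex"
    and sc :: "complex \<Rightarrow> 'a::ring_1"
    and x d g :: "nat \<Rightarrow> 'a"
    and idx :: "nat \<Rightarrow> nat"
  assumes "n \<ge> 1"
    and "sym_invertible n eta"
    and "complex_alg_hom sc"
    and "weyl_clifford_rels n eta sc x d g"
    and "\<forall>k\<in>{1..m}. idx k \<in> {1..n}"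
    and "s \<ge> 1"
    and "2 * a + s + r + t = m"
  shows "(r = 0 \<longrightarrow>
            sad (Xop n sc d g) (bracket n eta sc x d g a s 0 t idx) 0 =
            sc (\<i> / complex_of_real (sqrt 2)) * bracket n eta sc x d g a (s - 1) 1 t idx)
       \<and> (r = 1 \<longrightarrow>
            sad (Xop n sc d g) (bracket n eta sc x d g a s 1 t idx) 1 =
            sc (2 * \<i> * of_nat (a + 1) / complex_of_real (sqrt 2)) *
              bracket n eta sc x d g (a + 1) (s - 1) 0 t idx +
            sc (2 * \<i> * of_nat (t + 1) / complex_of_real (sqrt 2)) *
              bracket n eta sc x d g a s 0 (t + 1) idx)"
proof -
  have symm: "\<forall>i\<in>{1..n}. \<forall>j\<in>{1..n}. eta i j = eta j i"
    using assms(2) unfolding sym_invertible_def by blast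
  interpret wc n eta sc x d g using assms(3,4) symm by unfold_locales
  define c :: complex where "c = \<i> / complex_of_real (sqrt 2)"
  have X: "Xop n sc d g = sc c * D" by (simp add: Xop_def D_def c_def)
  obtain s' where s: "s = Suc s'" using assms(6) by (cases s) auto
  show ?thesis
  proof (intro conjI impI)
    assume r0: "r = 0"
    have m: "m = 2*a + Suc s' + t" using assms(7) r0 s by simp
    define P where "P = {\<sigma>. \<sigma> permutes {1..m}}"
    define S0 where "S0 = (\<Sum>\<sigma>\<in>P. Tsig n eta sc x d g a (Suc s') 0 t idx \<sigma>)"
    define S1 where "S1 = (\<Sum>\<sigma>\<in>P. Tsig n eta sc x d g a s' 1 t idx \<sigma>)"
    define c0 :: complex where "c0 = 1 / (2^a * fact a * fact (Suc s') * fact t)"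
    define c1 :: complex where "c1 = 1 / (2^a * fact a * fact s' * fact t)"
    have B0: "bracket n eta sc x d g a s 0 t idx = sc c0 * S0"
      by (simp add: bracket_def s m S0_def P_def c0_def)
    have B1: "bracket n eta sc x d g a (s-1) 1 t idx = sc c1 * S1"
      by (simp add: bracket_def s m S1_def P_def c1_def)
    have key: "D * S0 - S0 * D = of_nat (Suc s') * S1"
    proof -
      have "D * S0 - S0 * D = (\<Sum>\<sigma>\<in>P. D * Tsig n eta sc x d g a (Suc s') 0 t idx \<sigma> - Tsig n eta sc x d g a (Suc s') 0 t idx \<sigma> * D)"
        by (simp add: S0_def sum_distrib_left sum_distrib_right sum_subtractf)
      also have "\<dots> = of_nat (Suc s') * S1" unfolding P_def S1_def by (rule sum_r0[OF assms(5) m])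
      finally show ?thesis .
    qed
    have coef: "c0 * of_nat (Suc s') = c1"
      by (simp add: c0_def c1_def field_simps del: of_nat_Suc)
    have "sad (Xop n sc d g) (sc c0 * S0) 0 = sc c * sc c0 * (D * S0 - S0 * D)"
    proof -
      have 1: "sc c * D * (sc c0 * S0) = sc c * sc c0 * (D * S0)"
      proof -
        have "sc c * D * (sc c0 * S0) = sc c * (D * sc c0) * S0" by (simp only: mult.assoc)
        also have "D * sc c0 = sc c0 * D" by (rule D_sc)
        finally show ?thesis by (simp only: mult.assoc)
      qed
      have 2: "sc c0 * S0 * (sc c * D) = sc c * sc c0 * (S0 * D)"
      proof -
        have "sc c0 * S0 * (sc c * D) = sc c0 * (S0 * sc c) * D" by (simp only: mult.assoc)
        also have "S0 * sc c = sc c * S0" by (rule sc_central[symmetric])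
        also have "sc c0 * (sc c * S0) * D = (sc c0 * sc c) * (S0 * D)" by (simp only: mult.assoc)
        also have "sc c0 * sc c = sc c * sc c0" by (rule sc_central)
        finally show ?thesis .
      qed
      show ?thesis unfolding sad_def X using 1 2 by (simp add: right_diff_distrib)
    qed
    also have "\<dots> = sc c * (sc (c0 * of_nat (Suc s')) * S1)"
      unfolding key sc_mult sc_of_nat by (simp only: mult.assoc)
    also have "\<dots> = sc c * (sc c1 * S1)" unfolding coef ..
    finally have final: "sad (Xop n sc d g) (sc c0 * S0) 0 = sc c * (sc c1 * S1)" .
    show "sad (Xop n sc d g) (bracket n eta sc x d g a s 0 t idx) 0 =
            sc (\<i> / complex_of_real (sqrt 2)) * bracket n eta sc x d g a (s - 1) 1 t idx"
      using final unfolding B0 B1 c_def .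
  next
    assume r1: "r = 1"
    have m: "m = 2*a + Suc s' + 1 + t" using assms(7) r1 s by simp
    define P where "P = {\<sigma>. \<sigma> permutes {1..m}}"
    define S0 where "S0 = (\<Sum>\<sigma>\<in>P. Tsig n eta sc x d g a (Suc s') 1 t idx \<sigma>)"
    define S2 where "S2 = (\<Sum>\<sigma>\<in>P. Tsig n eta sc x d g (a+1) s' 0 t idx \<sigma>)"
    define S3 where "S3 = (\<Sum>\<sigma>\<in>P. Tsig n eta sc x d g a (Suc s') 0 (Suc t) idx \<sigma>)"
    define c0 :: complex where "c0 = 1 / (2^a * fact a * fact (Suc s') * fact t)"
    define c2 :: complex where "c2 = 1 / (2^(a+1) * fact (a+1) * fact s' * fact t)"
    define c3 :: complex where "c3 = 1 / (2^a * fact a * fact (Suc s') * fact (Suc t))"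
    have B0: "bracket n eta sc x d g a s 1 t idx = sc c0 * S0"
      by (simp add: bracket_def s m S0_def P_def c0_def)
    have B2: "bracket n eta sc x d g (a+1) (s-1) 0 t idx = sc c2 * S2"
      by (simp add: bracket_def s m S2_def P_def c2_def)
    have B3: "bracket n eta sc x d g a s 0 (t+1) idx = sc c3 * S3"
      by (simp add: bracket_def s m S3_def P_def c3_def)
    have key: "D * S0 + S0 * D = 2 * S3 + of_nat (Suc s') * S2"
    proof -
      have "D * S0 + S0 * D = (\<Sum>\<sigma>\<in>P. D * Tsig n eta sc x d g a (Suc s') 1 t idx \<sigma> + Tsig n eta sc x d g a (Suc s') 1 t idx \<sigma> * D)"
        by (simp add: S0_def sum_distrib_left sum_distrib_right sum.distrib)
      also have "\<dots> = 2 * S3 + of_nat (Suc s') * S2" unfolding P_def S2_def S3_def by (rule sum_r1[OF assms(5) m])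
      finally show ?thesis .
    qed
    have coef2: "c * c0 * of_nat (Suc s') = 2 * \<i> * of_nat (a + 1) / complex_of_real (sqrt 2) * c2"
      by (simp add: c_def c0_def c2_def field_simps del: of_nat_Suc)
    have coef3: "c * c0 * 2 = 2 * \<i> * of_nat (t + 1) / complex_of_real (sqrt 2) * c3"
      by (simp add: c_def c0_def c3_def field_simps del: of_nat_Suc)
    have "sad (Xop n sc d g) (sc c0 * S0) 1 = sc c * sc c0 * (D * S0 + S0 * D)"
    proof -
      have 1: "sc c * D * (sc c0 * S0) = sc c * sc c0 * (D * S0)"
      proof -
        have "sc c * D * (sc c0 * S0) = sc c * (D * sc c0) * S0" by (simp only: mult.assoc)
        also have "D * sc c0 = sc c0 * D" by (rule D_sc)
        finally show ?thesis by (simp only: mult.assoc)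
      qed
      have 2: "sc c0 * S0 * (sc c * D) = sc c * sc c0 * (S0 * D)"
      proof -
        have "sc c0 * S0 * (sc c * D) = sc c0 * (S0 * sc c) * D" by (simp only: mult.assoc)
        also have "S0 * sc c = sc c * S0" by (rule sc_central[symmetric])
        also have "sc c0 * (sc c * S0) * D = (sc c0 * sc c) * (S0 * D)" by (simp only: mult.assoc)
        also have "sc c0 * sc c = sc c * sc c0" by (rule sc_central)
        finally show ?thesis .
      qed
      show ?thesis unfolding sad_def X using 1 2 by (simp add: distrib_left)
    qed
    also have "\<dots> = sc (c * c0 * 2) * S3 + sc (c * c0 * of_nat (Suc s')) * S2"
      unfolding key sc_mult sc_of_nat sc_2 by (simp only: distrib_left mult.assoc add.commute)
    also have "\<dots> = sc (2 * \<i> * of_nat (a + 1) / complex_of_real (sqrt 2)) * (sc c2 * S2) +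
            sc (2 * \<i> * of_nat (t + 1) / complex_of_real (sqrt 2)) * (sc c3 * S3)"
      unfolding coef2 coef3 sc_mult by (simp only: mult.assoc add.commute)
    finally have final: "sad (Xop n sc d g) (sc c0 * S0) 1 =
            sc (2 * \<i> * of_nat (a + 1) / complex_of_real (sqrt 2)) * (sc c2 * S2) +
            sc (2 * \<i> * of_nat (t + 1) / complex_of_real (sqrt 2)) * (sc c3 * S3)" .
    show "sad (Xop n sc d g) (bracket n eta sc x d g a s 1 t idx) 1 =
            sc (2 * \<i> * of_nat (a + 1) / complex_of_real (sqrt 2)) *
              bracket n eta sc x d g (a + 1) (s - 1) 0 t idx +
            sc (2 * \<i> * of_nat (t + 1) / complex_of_real (sqrt 2)) *
              bracket n eta sc x d g a s 0 (t + 1) idx"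
      using final unfolding B0 B2 B3 .
  qed
qed

end
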